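(* Over profiles whose ballots are strict weak orders (ties allowed), let $f$ be a VCCR satisfying Anonymity, Neutrality, Availability, Neutral Indifference, Monotonicity for two-candidate profiles (in particular, if it satisfies Monotonicity), Neutral Reversal, and Coherent IIA. Then $sc(\mathbf P)\supseteq f(\mathbf P)$ for every profile $\mathbf P$.
   Context: Profiles: $\mathbf P:V\to\mathcal W(X)$, $V$ nonempty finite set of voters, $X=X(\mathbf P)$ nonempty finite set of candidates (from fixed infinite sets), $\mathcal W(X)$ the strict weak orders on $X$ (irreflexive, transitive, negatively transitive; the empty relation, all tied, is allowed). "Ranks $x$ above $y$" means strictly. $\mathbf P_{|Y}$ restricts ballots to $Y$. $\mathrm{Margin}_{\mathbf P}(x,y)$ = #voters with $x$ strictly above $y$ minus #voters with $y$ strictly above $x$. $\mathcal M(\mathbf P)$: edges $x\to y$ weighted $\mathrm{Margin}_{\mathbf P}(x,y)$ when positive. Majority paths and strength (minimum consecutive margin) as usual. VCCR: $f(\mathbf P)$ asymmetric relation on $X(\mathbf P)$. $(x,y)\in sc(\mathbf P)$ iff $\mathrm{Margin}_{\mathbf P}(x,y)>0$ exceeds the strength of every majority path from $y$ to $x$. Moving up one place: for strict weak order $\succ$ on finite $X$ and $x$ not greatest, let $x'\ne x$ be $\succ$-minimal with $x\not\succ x'$; $\succ'$ results from moving $x$ up one place if it agrees with $\succ$ off $x$, and: if $x$ is tied with $x'$ in $\succ$ then in $\succ'$ $x$ is tied with nothing, $x\succ'x'$, and $y\succ x$ implies $y\succ'x$; if $x$ is tied with nothing in $\succ$, then $x$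 is tied with $x'$ in $\succ'$. Axioms: Anonymity (permuting which voter has which ballot, same voter set, leaves $f$ unchanged); Neutrality (if a bijection $\pi$ of candidates transforms $\mathbf P$ into $\mathbf P'$ ballot-wise, same voters and candidates, then $(x,y)\in f(\mathbf P)\iff(\pi x,\pi y)\in f(\mathbf P')$); Availability (some candidate is undefeated in every profile); Neutral Indifference (adding a voter with empty ballot leaves $f$ unchanged); Monotonicity (resp. for two-candidate profiles): moving $x$ up one place in one ballot of a (resp. two-candidate) profile preserves $(x,y)\in f(\cdot)$; Neutral Reversal (adding two voters with converse ballots leaves $f$ unchanged); Coherent IIA: with $\mathbf P\rightsquigarrow_{x,y}\mathbf P'$ meaning $\mathbf P_{|\{x,y\}}=\mathbf P'_{|\{x,y\}}$ and $\mathcal M(\mathbf P')$ obtainable from $\mathcal M(\mathbf P)$ by deleting zero or more candidates other than $x,y$ and deleting or reducing weights of zero or more edges not connecting $x,y$, $(x,y)\in f(\mathbf P)$ and $\mathbf P\rightsquigarrow_{x,y}\mathbf P'$ imply $(x,y)\in f(\mathbf P')$. *)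

theory Defs
  imports Main
begin

text \<open>A profile is a triple (V, X, P): a set of voters, a set of candidates,
  and the ballot of each voter (a strict relation on candidates, "a above b").
  Ballots of non-voters are required to be empty, so that profiles have a
  canonical representation.\<close>

type_synonym ('v, 'c) profile = "'v set \<times> 'c set \<times> ('v \<Rightarrow> 'c rel)"

definition voters :: "('v, 'c) profile \<Rightarrow> 'v set" where
  "voters P = fst P"

definition cands :: "('v, 'c) profile \<Rightarrow> 'c set" where
  "cands P = fst (snd P)"

definition ballot :: "('v, 'c) profile \<Rightarrow> 'v \<Rightarrow> 'c rel" where
  "ballot P = snd (snd P)"

definition strict_weak_order :: "'c set \<Rightarrow> 'c rel \<Rightarrow> bool" where
  "strict_weak_order X R \<longleftrightarrow>
     R \<subseteq> X \<times> X \<and>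
     (\<forall>x\<in>X. (x, x) \<notin> R) \<and>
     (\<forall>x\<in>X. \<forall>y\<in>X. \<forall>z\<in>X. (x, y) \<in> R \<longrightarrow> (y, z) \<in> R \<longrightarrow> (x, z) \<in> R) \<and>
     (\<forall>x\<in>X. \<forall>y\<in>X. \<forall>z\<in>X. (x, z) \<notin> R \<longrightarrow> (z, y) \<notin> R \<longrightarrow> (x, y) \<notin> R)"

definition is_profile :: "('v, 'c) profile \<Rightarrow> bool" where
  "is_profile P \<longleftrightarrow>
     finite (voters P) \<and> voters P \<noteq> {} \<and> finite (cands P) \<and> cands P \<noteq> {} \<and>
     (\<forall>v\<in>voters P. strict_weak_order (cands P) (ballot P v)) \<and>
     (\<forall>v. v \<notin> voters P \<longrightarrow> ballot P v = {})"

definition margin :: "('v, 'c) profile \<Rightarrow> 'c \<Rightarrow> 'c \<Rightarrow> int" where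
  "margin P x y =
     int (card {v \<in> voters P. (x, y) \<in> ballot P v}) - int (card {v \<in> voters P. (y, x) \<in> ballot P v})"

definition majority_path :: "('v, 'c) profile \<Rightarrow> 'c list \<Rightarrow> bool" where
  "majority_path P xs \<longleftrightarrow>
     length xs \<ge> 2 \<and> set xs \<subseteq> cands P \<and>
     (\<forall>i. Suc i < length xs \<longrightarrow> margin P (xs ! i) (xs ! Suc i) > 0)"

definition path_strength :: "('v, 'c) profile \<Rightarrow> 'c list \<Rightarrow> int" where
  "path_strength P xs = Min {margin P (xs ! i) (xs ! Suc i) | i. Suc i < length xs}"

definition split_cycle :: "('v, 'c) profile \<Rightarrow> 'c rel" where
  "split_cycle P = {(x, y). x \<in> cands P \<and> y \<in> cands P \<and> margin P x y > 0 \<and>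
     (\<forall>xs. majority_path P xs \<and> hd xs = y \<and> last xs = x \<longrightarrow> margin P x y > path_strength P xs)}"

definition is_vccr :: "(('v, 'c) profile \<Rightarrow> 'c rel) \<Rightarrow> bool" where
  "is_vccr f \<longleftrightarrow> (\<forall>P. is_profile P \<longrightarrow>
     f P \<subseteq> cands P \<times> cands P \<and> (\<forall>x y. (x, y) \<in> f P \<longrightarrow> (y, x) \<notin> f P))"

definition anonymity :: "(('v, 'c) profile \<Rightarrow> 'c rel) \<Rightarrow> bool" where
  "anonymity f \<longleftrightarrow> (\<forall>P \<pi>. is_profile P \<longrightarrow> bij_betw \<pi> (voters P) (voters P) \<longrightarrow>
     f (voters P, cands P, \<lambda>v. if v \<in> voters P then ballot P (\<pi> v) else {}) = f P)"

definition neutrality :: "(('v, 'c) profile \<Rightarrow> 'c rel) \<Rightarrow> bool" where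
  "neutrality f \<longleftrightarrow> (\<forall>P \<pi>. is_profile P \<longrightarrow> bij_betw \<pi> (cands P) (cands P) \<longrightarrow>
     (\<forall>x\<in>cands P. \<forall>y\<in>cands P.
        (x, y) \<in> f P \<longleftrightarrow>
        (\<pi> x, \<pi> y) \<in> f (voters P, cands P, \<lambda>v. {(\<pi> a, \<pi> b) | a b. (a, b) \<in> ballot P v})))"

definition availability :: "(('v, 'c) profile \<Rightarrow> 'c rel) \<Rightarrow> bool" where
  "availability f \<longleftrightarrow> (\<forall>P. is_profile P \<longrightarrow> (\<exists>x\<in>cands P. \<forall>y. (y, x) \<notin> f P))"

definition neutral_indifference :: "(('v, 'c) profile \<Rightarrow> 'c rel) \<Rightarrow> bool" where
  "neutral_indifference f \<longleftrightarrow> (\<forall>P i. is_profile P \<longrightarrow> i \<notin> voters P \<longrightarrow>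
     f (insert i (voters P), cands P, (ballot P)(i := {})) = f P)"

text \<open>\<open>R'\<close> results from \<open>R\<close> (a strict weak order on \<open>X\<close>) by moving \<open>x\<close> up one place.
  "Tied" means: distinct and neither is strictly above the other.\<close>

definition tied :: "'c rel \<Rightarrow> 'c \<Rightarrow> 'c \<Rightarrow> bool" where
  "tied R a b \<longleftrightarrow> a \<noteq> b \<and> (a, b) \<notin> R \<and> (b, a) \<notin> R"

definition move_up_one :: "'c set \<Rightarrow> 'c rel \<Rightarrow> 'c \<Rightarrow> 'c rel \<Rightarrow> bool" where
  "move_up_one X R x R' \<longleftrightarrow>
     x \<in> X \<and> strict_weak_order X R \<and> strict_weak_order X R' \<and>
     (\<forall>a\<in>X. \<forall>b\<in>X. a \<noteq> x \<longrightarrow> b \<noteq> x \<longrightarrow> ((a, b) \<in> R' \<longleftrightarrow> (a, b) \<in> R)) \<and>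
     (\<exists>x'\<in>X. x' \<noteq> x \<and> (x, x') \<notin> R \<and>
        (\<forall>z\<in>X. z \<noteq> x \<longrightarrow> (x, z) \<notin> R \<longrightarrow> (x', z) \<notin> R) \<and>
        (tied R x x' \<longrightarrow>
           (\<forall>z\<in>X. \<not> tied R' x z) \<and> (x, x') \<in> R' \<and> (\<forall>y\<in>X. (y, x) \<in> R \<longrightarrow> (y, x) \<in> R')) \<and>
        ((\<forall>z\<in>X. \<not> tied R x z) \<longrightarrow> tied R' x x'))"

definition monotonicity_two :: "(('v, 'c) profile \<Rightarrow> 'c rel) \<Rightarrow> bool" where
  "monotonicity_two f \<longleftrightarrow> (\<forall>P i x y R'. is_profile P \<longrightarrow> card (cands P) = 2 \<longrightarrow>
     i \<in> voters P \<longrightarrow> move_up_one (cands P) (ballot P i) x R' \<longrightarrow> (x, y) \<in> f P \<longrightarrow>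
     (x, y) \<in> f (voters P, cands P, (ballot P)(i := R')))"

definition neutral_reversal :: "(('v, 'c) profile \<Rightarrow> 'c rel) \<Rightarrow> bool" where
  "neutral_reversal f \<longleftrightarrow> (\<forall>P i j R. is_profile P \<longrightarrow> i \<notin> voters P \<longrightarrow> j \<notin> voters P \<longrightarrow>
     i \<noteq> j \<longrightarrow> strict_weak_order (cands P) R \<longrightarrow>
     f (insert i (insert j (voters P)), cands P, (ballot P)(i := R, j := R\<inverse>)) = f P)"

definition restrict_profile :: "('v, 'c) profile \<Rightarrow> 'c set \<Rightarrow> ('v, 'c) profile" where
  "restrict_profile P Y = (voters P, cands P \<inter> Y, \<lambda>v. ballot P v \<inter> (Y \<times> Y))"

definition coherent_step :: "('v, 'c) profile \<Rightarrow> 'c \<Rightarrow> 'c \<Rightarrow> ('v, 'c) profile \<Rightarrow> bool" where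
  "coherent_step P x y P' \<longleftrightarrow>
     restrict_profile P {x, y} = restrict_profile P' {x, y} \<and>
     cands P' \<subseteq> cands P \<and> x \<in> cands P' \<and> y \<in> cands P' \<and>
     (\<forall>a\<in>cands P'. \<forall>b\<in>cands P'. margin P' a b > 0 \<longrightarrow>
        margin P a b > 0 \<and> margin P' a b \<le> margin P a b \<and>
        ({a, b} = {x, y} \<longrightarrow> margin P' a b = margin P a b))"

definition coherent_IIA :: "(('v, 'c) profile \<Rightarrow> 'c rel) \<Rightarrow> bool" where
  "coherent_IIA f \<longleftrightarrow> (\<forall>P P' x y. is_profile P \<longrightarrow> is_profile P' \<longrightarrow>
     (x, y) \<in> f P \<longrightarrow> coherent_step P x y P' \<longrightarrow> (x, y) \<in> f P')"

end

theory Submission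
  imports Defs "HOL-Library.Transitive_Closure_Table"
begin
(* Proof: two-candidate reduction plus a rotation-symmetric cycle profile. *)

definition dd :: "'c rel \<Rightarrow> 'c \<Rightarrow> 'c \<Rightarrow> int" where
  "dd R a b = (if (a,b) \<in> R then 1 else 0) - (if (b,a) \<in> R then 1 else 0)"

definition bo :: "'c set \<Rightarrow> ('c \<Rightarrow> int) \<Rightarrow> 'c rel" where
  "bo X h = {(a,b). a \<in> X \<and> b \<in> X \<and> h b < h a}"

lemma int_card_filter:
  assumes "finite V"
  shows "int (card {v \<in> V. p v}) = (\<Sum>v\<in>V. if p v then 1 else 0)"
proof -
  have "(\<Sum>v\<in>V. if p v then 1 else 0 :: int) = (\<Sum>v\<in>{v \<in> V. p v}. 1)"
    by (rule sum.inter_filter[symmetric, OF assms])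
  then show ?thesis by simp
qed

lemma margin_sum:
  assumes "finite (voters P)"
  shows "margin P a b = (\<Sum>v\<in>voters P. dd (ballot P v) a b)"
  unfolding margin_def dd_def using assms
  by (simp add: int_card_filter sum_subtractf)

lemma margin_anti: "margin P a b = - margin P b a"
  unfolding margin_def by simp

lemma swo_bo: "strict_weak_order X (bo X h)"
  unfolding strict_weak_order_def bo_def by auto

lemma swo_empty: "strict_weak_order X {}"
  unfolding strict_weak_order_def by auto

lemma swo_converse: "strict_weak_order X R \<Longrightarrow> strict_weak_order X (R\<inverse>)"
  unfolding strict_weak_order_def by blast

lemma swo_asym: "strict_weak_order X R \<Longrightarrow> (a,b) \<in> R \<Longrightarrow> (b,a) \<notin> R"
  unfolding strict_weak_order_def by blast

lemma swo_irrefl: "strict_weak_order X R \<Longrightarrow> (a,a) \<notin> R"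
  unfolding strict_weak_order_def by blast

lemma swo_restr:
  assumes "strict_weak_order X R"
  shows "R \<inter> {x,y} \<times> {x,y} = (if (x,y) \<in> R then {(x,y)} else {}) \<union> (if (y,x) \<in> R then {(y,x)} else {})"
  using swo_irrefl[OF assms] by auto

lemma swo_restrict_set: "strict_weak_order X R \<Longrightarrow> strict_weak_order (X \<inter> Y) (R \<inter> Y \<times> Y)"
  unfolding strict_weak_order_def by blast

lemma dd_conv: "dd (R\<inverse>) a b = - dd R a b"
  unfolding dd_def by simp

lemma dd_empty[simp]: "dd {} a b = 0"
  unfolding dd_def by simp

lemma dd_bo: "a \<in> X \<Longrightarrow> b \<in> X \<Longrightarrow> dd (bo X h) a b = (if h b < h a then 1 else 0) - (if h a < h b then 1 else 0)"
  unfolding dd_def bo_def by simp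

lemma image_bo:
  assumes "bij_betw \<pi> X X" "\<And>z. z \<in> X \<Longrightarrow> h' (\<pi> z) = h z"
  shows "{(\<pi> a, \<pi> b) | a b. (a,b) \<in> bo X h} = bo X h'"
proof
  show "{(\<pi> a, \<pi> b) | a b. (a,b) \<in> bo X h} \<subseteq> bo X h'"
    using assms unfolding bo_def bij_betw_def by auto
next
  show "bo X h' \<subseteq> {(\<pi> a, \<pi> b) | a b. (a,b) \<in> bo X h}"
  proof
    fix p assume "p \<in> bo X h'"
    then obtain a' b' where p: "p = (a',b')" "a' \<in> X" "b' \<in> X" "h' b' < h' a'" unfolding bo_def by auto
    from assms(1) p obtain a b where "a \<in> X" "b \<in> X" "a' = \<pi> a" "b' = \<pi> b"
      unfolding bij_betw_def by (metis imageE)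
    then show "p \<in> {(\<pi> a, \<pi> b) | a b. (a,b) \<in> bo X h}" using p assms(2) unfolding bo_def by auto
  qed
qed

lemma two_ballots:
  assumes "is_profile Q" "cands Q = {x,y}" "v \<in> voters Q"
  shows "ballot Q v = {} \<or> ballot Q v = {(x,y)} \<or> ballot Q v = {(y,x)}"
proof -
  have s: "strict_weak_order {x,y} (ballot Q v)" using assms unfolding is_profile_def by auto
  then have "ballot Q v \<subseteq> {x,y} \<times> {x,y}" unfolding strict_weak_order_def by auto
  then have "ballot Q v = ballot Q v \<inter> {x,y} \<times> {x,y}" by auto
  also have "\<dots> = (if (x,y) \<in> ballot Q v then {(x,y)} else {}) \<union> (if (y,x) \<in> ballot Q v then {(y,x)} else {})"
    by (rule swo_restr[OF s])
  finally show ?thesis using swo_asym[OF s, of x y] by (auto split: if_splits)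
qed

lemma swap_case:
  assumes vccr: "is_vccr f" and an: "anonymity f" and ne: "neutrality f"
    and Q: "is_profile Q" "cands Q = {x,y}" "x \<noteq> y" "margin Q x y = 0" "(x,y) \<in> f Q"
  shows False
proof -
  define V where "V = voters Q"
  define Fw where "Fw = {v \<in> V. (x,y) \<in> ballot Q v}"
  define Bw where "Bw = {v \<in> V. (y,x) \<in> ballot Q v}"
  have finV: "finite V" using Q unfolding is_profile_def V_def by auto
  have "card Fw = card Bw" using Q(4) unfolding margin_def Fw_def Bw_def V_def by simp
  then obtain h where h: "bij_betw h Fw Bw"
    using finite_same_card_bij[of Fw Bw] finV unfolding Fw_def Bw_def by auto
  define \<sigma> where "\<sigma> v = (if v \<in> Fw then h v else if v \<in> Bw then inv_into Fw h v else v)" for v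
  have bal: "ballot Q v = {} \<or> ballot Q v = {(x,y)} \<or> ballot Q v = {(y,x)}" if "v \<in> V" for v
    using two_ballots[OF Q(1,2)] that V_def by auto
  have FwB: "v \<in> Fw \<Longrightarrow> ballot Q v = {(x,y)}" for v using bal[of v] Q(3) unfolding Fw_def by auto
  have BwB: "v \<in> Bw \<Longrightarrow> ballot Q v = {(y,x)}" for v using bal[of v] Q(3) unfolding Bw_def by auto
  have RB: "v \<in> V - Fw - Bw \<Longrightarrow> ballot Q v = {}" for v using bal[of v] Q(3) unfolding Fw_def Bw_def by auto
  have disj: "Fw \<inter> Bw = {}" using FwB BwB Q(3) by fastforce
  have b1: "bij_betw \<sigma> Fw Bw"
    using h bij_betw_cong[of Fw \<sigma> h Bw] unfolding \<sigma>_def by auto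
  have "\<forall>a\<in>Bw. \<sigma> a = inv_into Fw h a" using disj unfolding \<sigma>_def by auto
  then have b2: "bij_betw \<sigma> Bw Fw"
    using bij_betw_inv_into[OF h] bij_betw_cong[of Bw \<sigma> "inv_into Fw h" Fw] by auto
  have b3: "bij_betw \<sigma> (V - Fw - Bw) (V - Fw - Bw)"
    using bij_betw_id bij_betw_cong[of "V - Fw - Bw" \<sigma> id "V - Fw - Bw"] unfolding \<sigma>_def by auto
  have "bij_betw \<sigma> (Fw \<union> Bw \<union> (V - Fw - Bw)) (Bw \<union> Fw \<union> (V - Fw - Bw))"
    by (rule bij_betw_combine[OF bij_betw_combine[OF b1 b2]]) (use b3 disj in auto)
  moreover have "Fw \<union> Bw \<union> (V - Fw - Bw) = V" "Bw \<union> Fw \<union> (V - Fw - Bw) = V"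
    unfolding Fw_def Bw_def by auto
  ultimately have bs: "bij_betw \<sigma> V V" by simp
  define \<tau> where "\<tau> z = (if z = x then y else if z = y then x else z)" for z
  have bt: "bij_betw \<tau> (cands Q) (cands Q)" unfolding Q(2) bij_betw_def inj_on_def \<tau>_def by auto
  have "(\<tau> x, \<tau> y) \<in> f (voters Q, cands Q, \<lambda>v. {(\<tau> a, \<tau> b) | a b. (a, b) \<in> ballot Q v})"
  proof -
    have "x \<in> cands Q" "y \<in> cands Q" using Q(2) by auto
    then show ?thesis using ne[unfolded neutrality_def, rule_format, OF Q(1) bt] Q(5) by blast
  qed
  moreover have "(\<lambda>v. {(\<tau> a, \<tau> b) | a b. (a, b) \<in> ballot Q v}) =
      (\<lambda>v. if v \<in> voters Q then ballot Q (\<sigma> v) else {})"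
  proof
    fix v
    show "{(\<tau> a, \<tau> b) | a b. (a, b) \<in> ballot Q v} = (if v \<in> voters Q then ballot Q (\<sigma> v) else {})"
    proof (cases "v \<in> V")
      case False
      then have "ballot Q v = {}" using Q(1) unfolding is_profile_def V_def by auto
      then show ?thesis using False V_def by simp
    next
      case True
      show ?thesis
      proof (cases "v \<in> Fw")
        case True
        then have "\<sigma> v \<in> Bw" using b1 unfolding bij_betw_def by auto
        have "{(\<tau> a, \<tau> b) | a b. (a, b) \<in> ballot Q v} = {(y,x)}"
          using FwB[OF True] by (auto simp: \<tau>_def)
        moreover have "v \<in> voters Q" using \<open>v \<in> V\<close> V_def by simp
        ultimately show ?thesis using BwB[OF \<open>\<sigma> v \<in> Bw\<close>] by simp
      next
        case nF: False
        show ?thesis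
        proof (cases "v \<in> Bw")
          case True
          then have "\<sigma> v \<in> Fw" using b2 unfolding bij_betw_def by auto
          have "{(\<tau> a, \<tau> b) | a b. (a, b) \<in> ballot Q v} = {(x,y)}"
            using BwB[OF True] Q(3) by (auto simp: \<tau>_def)
          moreover have "v \<in> voters Q" using \<open>v \<in> V\<close> V_def by simp
          ultimately show ?thesis using FwB[OF \<open>\<sigma> v \<in> Fw\<close>] by simp
        next
          case False
          then have "\<sigma> v = v" "ballot Q v = {}" using nF \<open>v \<in> V\<close> RB by (auto simp: \<sigma>_def)
          then show ?thesis using \<open>v \<in> V\<close> V_def by simp
        qed
      qed
    qed
  qed
  ultimately have "(y,x) \<in> f (voters Q, cands Q, \<lambda>v. if v \<in> voters Q then ballot Q (\<sigma> v) else {})"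
    unfolding \<tau>_def using Q(3) by auto
  also have "f (voters Q, cands Q, \<lambda>v. if v \<in> voters Q then ballot Q (\<sigma> v) else {}) = f Q"
    using an[unfolded anonymity_def, rule_format, OF Q(1), of \<sigma>] bs V_def by simp
  finally show False using vccr Q(1,5) unfolding is_vccr_def by auto
qed

lemma prof_upd_empty:
  assumes "is_profile Q" "i \<in> voters Q"
  shows "is_profile (voters Q, cands Q, (ballot Q)(i := {}))"
proof -
  have "\<forall>v\<in>voters Q. strict_weak_order (cands Q) (((ballot Q)(i := {})) v)"
    using assms swo_empty unfolding is_profile_def by simp
  moreover have "\<forall>v. v \<notin> voters Q \<longrightarrow> ((ballot Q)(i := {})) v = {}"
    using assms unfolding is_profile_def by auto
  ultimately show ?thesis using assms(1) unfolding is_profile_def voters_def cands_def ballot_def by simp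
qed
lemma move_up_tie:
  assumes "x \<noteq> y"
  shows "move_up_one {x,y} {(y,x)} x {}"
proof -
  have "strict_weak_order {x,y} {(y,x)}" unfolding strict_weak_order_def using assms by auto
  moreover have "strict_weak_order {x,y} {}" by (rule swo_empty)
  moreover have "tied {} x y" unfolding tied_def using assms by simp
  moreover have "\<not> tied {(y,x)} x y" unfolding tied_def by simp
  ultimately show ?thesis unfolding move_up_one_def using assms
    apply (simp only: Ball_def Bex_def)
    apply (intro conjI)
    apply simp_all
    apply (rule exI[of _ y])
    apply (auto simp: tied_def)
    done
qed

lemma two_cand_step:
  assumes vccr: "is_vccr f" and an: "anonymity f" and ne: "neutrality f" and mo: "monotonicity_two f"
  shows "\<forall>Q. is_profile Q \<longrightarrow> cands Q = {x,y} \<longrightarrow> x \<noteq> y \<longrightarrow> (x,y) \<in> f Q \<longrightarrow>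
     margin Q x y \<le> 0 \<longrightarrow> nat (- margin Q x y) = k \<longrightarrow> False"
proof (induction k)
  case 0
  then show ?case using swap_case[OF vccr an ne] by fastforce
next
  case (Suc k)
  show ?case
  proof (intro allI impI)
    fix Q :: "('a,'b) profile"
    assume Q: "is_profile Q" "cands Q = {x,y}" "x \<noteq> y" "(x,y) \<in> f Q" "margin Q x y \<le> 0"
      "nat (- margin Q x y) = Suc k"
    define V where "V = voters Q"
    have finV: "finite V" using Q unfolding is_profile_def V_def by auto
    have "card {v \<in> V. (y,x) \<in> ballot Q v} > 0" using Q(6) unfolding margin_def V_def by simp
    then have "{v \<in> V. (y,x) \<in> ballot Q v} \<noteq> {}" by (metis card.empty less_irrefl)
    then obtain i where i: "i \<in> V" "(y,x) \<in> ballot Q i" by blast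
    have bi: "ballot Q i = {(y,x)}" using two_ballots[OF Q(1,2), of i] i V_def Q(3) by auto
    define Q' where "Q' = (voters Q, cands Q, (ballot Q)(i := {}))"
    have mv: "move_up_one (cands Q) (ballot Q i) x {}" using move_up_tie[OF Q(3)] bi Q(2) by simp
    have "card (cands Q) = 2" using Q(2,3) by simp
    then have fQ': "(x,y) \<in> f Q'"
      using mo[unfolded monotonicity_two_def, rule_format, OF Q(1) _ _ mv Q(4)] i V_def Q'_def by simp
    have pQ': "is_profile Q'" using prof_upd_empty[OF Q(1), of i] i V_def Q'_def by simp
    have "margin Q x y = dd (ballot Q i) x y + (\<Sum>v\<in>V - {i}. dd (ballot Q v) x y)"
      using margin_sum[of Q] finV i V_def sum.remove[OF finV i(1), of "\<lambda>v. dd (ballot Q v) x y"] by simp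
    moreover have "margin Q' x y = dd {} x y + (\<Sum>v\<in>V - {i}. dd (ballot Q v) x y)"
    proof -
      have "margin Q' x y = (\<Sum>v\<in>V. dd (((ballot Q)(i := {})) v) x y)"
        using margin_sum[of Q'] finV V_def unfolding Q'_def voters_def ballot_def by simp
      also have "\<dots> = dd {} x y + (\<Sum>v\<in>V - {i}. dd (((ballot Q)(i := {})) v) x y)"
        using sum.remove[OF finV i(1), of "\<lambda>v. dd (((ballot Q)(i := {})) v) x y"] by simp
      finally show ?thesis by simp
    qed
    moreover have "dd (ballot Q i) x y = -1" using bi Q(3) unfolding dd_def by simp
    ultimately have "margin Q' x y = margin Q x y + 1" by simp
    moreover have "cands Q' = {x,y}" using Q(2) unfolding Q'_def cands_def by simp
    ultimately have m': "margin Q' x y \<le> 0" "nat (- margin Q' x y) = k" "cands Q' = {x,y}"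
      using Q(5,6) by auto
    show False using Suc.IH pQ' fQ' Q(3) m' by blast
  qed
qed

lemma two_cand:
  assumes "is_vccr f" "anonymity f" "neutrality f" "monotonicity_two f"
    "is_profile Q" "cands Q = {x,y}" "x \<noteq> y" "(x,y) \<in> f Q"
  shows "margin Q x y > 0"
proof (rule ccontr)
  assume "\<not> 0 < margin Q x y"
  then have "margin Q x y \<le> 0" by simp
  from two_cand_step[OF assms(1-4), of x y "nat (- margin Q x y)", rule_format, OF assms(5-8) this]
  show False by simp
qed

lemma list_rpath:
  "xs \<noteq> [] \<Longrightarrow> (\<forall>i. Suc i < length xs \<longrightarrow> E (xs!i) (xs!Suc i)) \<Longrightarrow> rtrancl_path E (hd xs) (tl xs) (last xs)"
proof (induction xs)
  case Nil
  then show ?case by simp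
next
  case (Cons a xs)
  show ?case
  proof (cases xs)
    case Nil
    then show ?thesis by (simp add: rtrancl_path.base)
  next
    case (Cons b ys)
    have "E a b" using Cons.prems(2)[rule_format, of 0] Cons by simp
    moreover have "\<forall>i. Suc i < length xs \<longrightarrow> E (xs!i) (xs!Suc i)"
      using Cons.prems(2) by (metis Suc_less_eq length_Cons nth_Cons_Suc)
    then have "rtrancl_path E (hd xs) (tl xs) (last xs)" using Cons.IH Cons by simp
    ultimately show ?thesis using Cons by (simp add: rtrancl_path.step)
  qed
qed

lemma rpath_nth: "rtrancl_path E a ps b \<Longrightarrow> i < length ps \<Longrightarrow> E ((a#ps)!i) (ps!i)"
proof (induction arbitrary: i rule: rtrancl_path.induct)
  case (base x)
  then show ?case by simp
next
  case (step x y ys z)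
  then show ?case by (cases i) auto
qed

lemma rpath_last: "rtrancl_path E a ps b \<Longrightarrow> (ps = [] \<longrightarrow> a = b) \<and> (ps \<noteq> [] \<longrightarrow> last ps = b)"
  by (induction rule: rtrancl_path.induct) (auto elim: rtrancl_path.cases)

lemma path_to_cycle:
  assumes P: "is_profile P" and xy: "x \<in> cands P" "y \<in> cands P" "x \<noteq> y"
    and mpos: "margin P x y > 0"
    and mp: "majority_path P xs" "hd xs = y" "last xs = x" "margin P x y \<le> path_strength P xs"
  shows "\<exists>n c. n \<ge> 3 \<and> inj_on c {..<n} \<and> c ` {..<n} \<subseteq> cands P \<and> c 0 = x \<and> c 1 = y \<and>
     (\<forall>i<n. margin P (c i) (c (Suc i mod n)) \<ge> margin P x y)"
proof -
  define m where "m = margin P x y"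
  define E where "E a b = (m \<le> margin P a b)" for a b
  have edges: "\<forall>i. Suc i < length xs \<longrightarrow> E (xs!i) (xs!Suc i)"
  proof (intro allI impI)
    fix i assume i: "Suc i < length xs"
    have "{margin P (xs ! i) (xs ! Suc i) | i. Suc i < length xs} = (\<lambda>i. margin P (xs ! i) (xs ! Suc i)) ` {i. Suc i < length xs}"
      by auto
    moreover have "{i. Suc i < length xs} \<subseteq> {..<length xs}" by auto
    then have "finite {i. Suc i < length xs}" using finite_subset by blast
    ultimately have fin: "finite {margin P (xs ! i) (xs ! Suc i) | i. Suc i < length xs}" by simp
    have "path_strength P xs \<le> margin P (xs ! i) (xs ! Suc i)"
      unfolding path_strength_def using i by (intro Min_le[OF fin]) auto
    then show "E (xs!i) (xs!Suc i)" using mp(4) unfolding E_def m_def by simp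
  qed
  have xsne: "xs \<noteq> []" using mp(1) unfolding majority_path_def by auto
  have "rtrancl_path E y (tl xs) x" using list_rpath[OF xsne edges] mp(2,3) by simp
  then obtain ps where ps: "rtrancl_path E y ps x" "distinct (y # ps)" "set ps \<subseteq> set (tl xs)"
    by (rule rtrancl_path_distinct)
  have setps: "set ps \<subseteq> cands P"
  proof -
    have "set (tl xs) \<subseteq> set xs" by (cases xs) auto
    moreover have "set xs \<subseteq> cands P" using mp(1) unfolding majority_path_def by simp
    ultimately show ?thesis using ps(3) by blast
  qed
  have psne: "ps \<noteq> []" using rpath_last[OF ps(1)] xy(3) by auto
  have lastps: "last ps = x" using rpath_last[OF ps(1)] psne by auto
  have len2: "length ps \<ge> 2"
  proof (rule ccontr)
    assume "\<not> length ps \<ge> 2"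
    moreover have "length ps > 0" using psne by simp
    ultimately have "length ps = 1" by linarith
    then have "ps!0 = x" using lastps psne by (simp add: last_conv_nth)
    then have "E y x" using rpath_nth[OF ps(1), of 0] \<open>length ps = 1\<close> by simp
    then show False using mpos margin_anti[of P y x] unfolding E_def m_def by simp
  qed
  define n where "n = Suc (length ps)"
  define c where "c i = (x # y # ps) ! i" for i
  have c0: "c 0 = x" and c1: "c 1 = y" unfolding c_def by auto
  have cS: "c (Suc i) = (y # ps) ! i" for i unfolding c_def by simp
  have lastyps: "(y # ps) ! length ps = x" using lastps psne by (simp add: last_conv_nth nth_Cons')
  have inj: "inj_on c {..<n}"
  proof (rule inj_onI)
    fix i j assume ij: "i \<in> {..<n}" "j \<in> {..<n}" "c i = c j"
    have dist: "a \<le> length ps \<Longrightarrow> b \<le> length ps \<Longrightarrow> (y#ps)!a = (y#ps)!b \<Longrightarrow> a = b" for a b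
      using ps(2) nth_eq_iff_index_eq[of "y#ps" a b] by simp
    show "i = j"
    proof (cases i)
      case 0
      show ?thesis
      proof (cases j)
        case (Suc j')
        then have "(y#ps)!j' = (y#ps)!(length ps)" using ij 0 c0 cS lastyps by simp
        then show ?thesis using dist[of j' "length ps"] ij Suc n_def by simp
      qed (use 0 in simp)
    next
      case (Suc i')
      show ?thesis
      proof (cases j)
        case 0
        then have "(y#ps)!i' = (y#ps)!(length ps)" using ij Suc c0 cS lastyps by simp
        then show ?thesis using dist[of i' "length ps"] ij Suc n_def by simp
      next
        case (Suc j')
        then show ?thesis using dist[of i' j'] ij \<open>i = Suc i'\<close> n_def cS by simp
      qed
    qed
  qed
  have img: "c ` {..<n} \<subseteq> cands P"
  proof
    fix z assume "z \<in> c ` {..<n}"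
    then obtain i where "i < n" "z = c i" by auto
    then have "i < length (x # y # ps)" unfolding n_def by simp
    from nth_mem[OF this] have "z \<in> set (x # y # ps)" using \<open>z = c i\<close> unfolding c_def by simp
    then show "z \<in> cands P" using xy setps by auto
  qed
  have edg: "\<forall>i<n. margin P (c i) (c (Suc i mod n)) \<ge> m"
  proof (intro allI impI)
    fix i assume i: "i < n"
    show "margin P (c i) (c (Suc i mod n)) \<ge> m"
    proof (cases i)
      case 0
      then have "Suc i mod n = 1" using len2 n_def psne by simp
      then have "c i = x" "c (Suc i mod n) = y" using 0 c0 c1 by simp_all
      then show ?thesis unfolding m_def by simp
    next
      case (Suc i')
      have i': "i' < length ps" using i unfolding Suc n_def by simp
      have e: "E ((y#ps)!i') (ps!i')" by (rule rpath_nth[OF ps(1) i'])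
      have "c (Suc i mod n) = ps ! i'"
      proof (cases "Suc i < n")
        case True
        then have "Suc i mod n = Suc i" by simp
        then show ?thesis using cS[of i] unfolding Suc by simp
      next
        case False
        then have "Suc i = n" using i by simp
        then have "i' = length ps - 1" using Suc n_def by simp
        then have "ps ! i' = x" using lastps psne by (simp add: last_conv_nth)
        then show ?thesis using \<open>Suc i = n\<close> c0 by simp
      qed
      then show ?thesis using e Suc cS unfolding E_def by simp
    qed
  qed
  show ?thesis
    by (rule exI[of _ n], rule exI[of _ c]) (use len2 n_def inj img c0 c1 edg m_def in simp)
qed

lemma prof_add_empties:
  assumes P: "is_profile P" and T: "finite T" "T \<inter> voters P = {}"
  shows "is_profile (voters P \<union> T, cands P, ballot P)"
proof -
  have "ballot P u = {}" if "u \<notin> voters P" for u using P that unfolding is_profile_def by blast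
  moreover have "\<forall>v\<in>voters P. strict_weak_order (cands P) (ballot P v)" using P unfolding is_profile_def by blast
  moreover have sel: "voters (voters P \<union> T, cands P, ballot P) = voters P \<union> T"
    "cands (voters P \<union> T, cands P, ballot P) = cands P" "ballot (voters P \<union> T, cands P, ballot P) = ballot P"
    unfolding voters_def cands_def ballot_def by simp_all
  moreover have "\<forall>v\<in>voters P \<union> T. strict_weak_order (cands P) (ballot P v)"
    using calculation(1,2) swo_empty by (metis UnE)
  ultimately show ?thesis using P T unfolding is_profile_def sel by auto
qed

lemma f_add_empties:
  assumes ni: "neutral_indifference f" and P: "is_profile P"
  shows "finite T \<Longrightarrow> T \<inter> voters P = {} \<Longrightarrow> f (voters P \<union> T, cands P, ballot P) = f P"
proof (induction T rule: finite_induct)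
  case empty
  have "(voters P \<union> {}, cands P, ballot P) = P" unfolding voters_def cands_def ballot_def by simp
  then show ?case by simp
next
  case (insert t T)
  define Q where "Q = (voters P \<union> T, cands P, ballot P)"
  have Q: "is_profile Q" unfolding Q_def using prof_add_empties[OF P insert(1)] insert(4) by auto
  have t: "t \<notin> voters Q" using insert(2,4) unfolding Q_def voters_def by auto
  have bt: "ballot P t = {}" using P insert(4) unfolding is_profile_def by auto
  have "f (insert t (voters Q), cands Q, (ballot Q)(t := {})) = f Q"
    using ni[unfolded neutral_indifference_def, rule_format, OF Q t] .
  moreover have "(insert t (voters Q), cands Q, (ballot Q)(t := {})) = (voters P \<union> insert t T, cands P, ballot P)"
  proof -
    have "voters Q = voters P \<union> T" "cands Q = cands P" "ballot Q = ballot P"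
      unfolding Q_def voters_def cands_def ballot_def by simp_all
    then show ?thesis using bt fun_upd_idem[of "ballot P" t "{}"] by simp
  qed
  ultimately show ?case using insert(3,4) Q_def by auto
qed

definition addp :: "('v,'c) profile \<Rightarrow> 'v set \<Rightarrow> 'v set \<Rightarrow> 'c rel \<Rightarrow> ('v,'c) profile" where
  "addp P A B R = (voters P \<union> A \<union> B, cands P, \<lambda>u. if u \<in> A then R else if u \<in> B then R\<inverse> else ballot P u)"

lemma addp_sel:
  "voters (addp P A B R) = voters P \<union> A \<union> B" "cands (addp P A B R) = cands P"
  "ballot (addp P A B R) = (\<lambda>u. if u \<in> A then R else if u \<in> B then R\<inverse> else ballot P u)"
  unfolding addp_def voters_def cands_def ballot_def by auto

lemma prof_addp:
  assumes P: "is_profile P" and R: "strict_weak_order (cands P) R" and fin: "finite A" "finite B"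
  shows "is_profile (addp P A B R)"
proof -
  have "ballot P u = {}" if "u \<notin> voters P" for u using P that unfolding is_profile_def by blast
  moreover have "\<forall>v\<in>voters P. strict_weak_order (cands P) (ballot P v)" using P unfolding is_profile_def by blast
  moreover have "strict_weak_order (cands P) (R\<inverse>)" using swo_converse[OF R] .
  ultimately show ?thesis using P fin R unfolding is_profile_def addp_sel by auto
qed

lemma f_addp:
  assumes nr: "neutral_reversal f" and P: "is_profile P" and R: "strict_weak_order (cands P) R"
  shows "finite A \<Longrightarrow> \<forall>B. finite B \<longrightarrow> card A = card B \<longrightarrow> A \<inter> B = {} \<longrightarrow> A \<inter> voters P = {} \<longrightarrow>
     B \<inter> voters P = {} \<longrightarrow> f (addp P A B R) = f P"
proof (induction A rule: finite_induct)
  case empty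
  show ?case
  proof (intro allI impI)
    fix B :: "'a set" assume "finite B" "card {} = card B"
    then have "B = {}" by simp
    then have "addp P {} B R = P" unfolding addp_def voters_def cands_def ballot_def by auto
    then show "f (addp P {} B R) = f P" by simp
  qed
next
  case (insert a A)
  show ?case
  proof (intro allI impI)
    fix B :: "'a set" assume B: "finite B" "card (insert a A) = card B" "insert a A \<inter> B = {}"
      "insert a A \<inter> voters P = {}" "B \<inter> voters P = {}"
    have "card B > 0" using B(2) insert(1,2) by simp
    then obtain b where b: "b \<in> B" by (metis card.empty ex_in_conv less_irrefl)
    define B' where "B' = B - {b}"
    have cB': "card A = card B'" using B(1,2) b insert(1,2) unfolding B'_def by simp
    have IH: "f (addp P A B' R) = f P"
      using insert(3)[rule_format, of B'] B cB' unfolding B'_def by auto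
    define Q where "Q = addp P A B' R"
    have Q: "is_profile Q" unfolding Q_def using prof_addp[OF P R insert(1)] B(1) B'_def by simp
    have a: "a \<notin> voters Q" using B insert(2) unfolding Q_def addp_sel B'_def by auto
    have bQ: "b \<notin> voters Q" using B b unfolding Q_def addp_sel B'_def by auto
    have ab: "a \<noteq> b" using B(3) b by auto
    have RQ: "strict_weak_order (cands Q) R" using R unfolding Q_def addp_sel .
    have "f (insert a (insert b (voters Q)), cands Q, (ballot Q)(a := R, b := R\<inverse>)) = f Q"
      using nr[unfolded neutral_reversal_def, rule_format, OF Q a bQ ab RQ] .
    moreover have "(insert a (insert b (voters Q)), cands Q, (ballot Q)(a := R, b := R\<inverse>)) = addp P (insert a A) B R"
    proof -
      have "insert a (insert b (voters Q)) = voters P \<union> insert a A \<union> B"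
        using b unfolding Q_def addp_sel B'_def by auto
      moreover have "(ballot Q)(a := R, b := R\<inverse>) = (\<lambda>u. if u \<in> insert a A then R else if u \<in> B then R\<inverse> else ballot P u)"
        using b ab B(3) unfolding Q_def addp_sel B'_def by (auto simp: fun_eq_iff)
      moreover have "cands Q = cands P" unfolding Q_def addp_sel by simp
      ultimately show ?thesis unfolding addp_def by simp
    qed
    ultimately show "f (addp P (insert a A) B R) = f P" using IH Q_def by simp
  qed
qed

lemma margin_addp:
  assumes P: "is_profile P" and fin: "finite A" "finite B" and dis: "A \<inter> B = {}" "A \<inter> voters P = {}" "B \<inter> voters P = {}"
  shows "margin (addp P A B R) a b = margin P a b + (int (card A) - int (card B)) * dd R a b"
proof -
  have finV: "finite (voters P)" using P unfolding is_profile_def by simp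
  let ?b = "ballot (addp P A B R)"
  have "margin (addp P A B R) a b = (\<Sum>u\<in>voters P \<union> A \<union> B. dd (?b u) a b)"
    using margin_sum[of "addp P A B R"] finV fin unfolding addp_sel by simp
  also have "\<dots> = (\<Sum>u\<in>voters P. dd (?b u) a b) + (\<Sum>u\<in>A. dd (?b u) a b) + (\<Sum>u\<in>B. dd (?b u) a b)"
  proof -
    have d1: "(voters P \<union> A) \<inter> B = {}" using dis by blast
    have d2: "voters P \<inter> A = {}" using dis by blast
    have e1: "sum g (voters P \<union> A \<union> B) = sum g (voters P \<union> A) + sum g B" for g :: "'a \<Rightarrow> int"
      using sum.union_disjoint[OF _ fin(2) d1] finV fin by simp
    have e2: "sum g (voters P \<union> A) = sum g (voters P) + sum g A" for g :: "'a \<Rightarrow> int"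
      using sum.union_disjoint[OF finV fin(1) d2] by simp
    show ?thesis by (simp only: e1 e2)
  qed
  also have "(\<Sum>u\<in>voters P. dd (?b u) a b) = margin P a b"
  proof -
    have "(\<Sum>u\<in>voters P. dd (?b u) a b) = (\<Sum>u\<in>voters P. dd (ballot P u) a b)"
      using dis unfolding addp_sel by (intro sum.cong) auto
    then show ?thesis using margin_sum[OF finV] by simp
  qed
  also have "(\<Sum>u\<in>A. dd (?b u) a b) = int (card A) * dd R a b" unfolding addp_sel by simp
  also have "(\<Sum>u\<in>B. dd (?b u) a b) = - int (card B) * dd R a b"
  proof -
    have "(\<Sum>u\<in>B. dd (?b u) a b) = (\<Sum>u\<in>B. - dd R a b)"
      using dis(1) unfolding addp_sel by (intro sum.cong) (auto simp: dd_conv)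
    then show ?thesis by simp
  qed
  finally show ?thesis by (simp add: algebra_simps)
qed

lemma margin_add_empties:
  assumes P: "is_profile P"
  shows "margin (voters P \<union> T, cands P, ballot P) a b = margin P a b"
proof -
  have "ballot P u = {}" if "u \<notin> voters P" for u using P that unfolding is_profile_def by blast
  then have "{v \<in> voters P \<union> T. (a,b) \<in> ballot P v} = {v \<in> voters P. (a,b) \<in> ballot P v}"
    "{v \<in> voters P \<union> T. (b,a) \<in> ballot P v} = {v \<in> voters P. (b,a) \<in> ballot P v}" by auto
  then show ?thesis unfolding margin_def voters_def cands_def ballot_def by simp
qed

lemma margin_restrict_eq:
  assumes "restrict_profile P {x,y} = restrict_profile P' {x,y}" "a \<in> {x,y}" "b \<in> {x,y}"
  shows "margin P a b = margin P' a b"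
proof -
  have V: "voters P = voters P'" and bl: "\<And>v. ballot P v \<inter> {x,y} \<times> {x,y} = ballot P' v \<inter> {x,y} \<times> {x,y}"
    using assms(1) unfolding restrict_profile_def by (auto simp: fun_eq_iff)
  have "(a,b) \<in> ballot P v \<longleftrightarrow> (a,b) \<in> ballot P' v" for v using bl[of v] assms(2,3) by blast
  moreover have "(b,a) \<in> ballot P v \<longleftrightarrow> (b,a) \<in> ballot P' v" for v using bl[of v] assms(2,3) by blast
  ultimately show ?thesis unfolding margin_def V by simp
qed

lemma restr_eq:
  assumes "(x,x) \<notin> R1" "(y,y) \<notin> R1" "(x,x) \<notin> R2" "(y,y) \<notin> R2"
    "(x,y) \<in> R1 \<longleftrightarrow> (x,y) \<in> R2" "(y,x) \<in> R1 \<longleftrightarrow> (y,x) \<in> R2"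
  shows "R1 \<inter> {x,y} \<times> {x,y} = R2 \<inter> {x,y} \<times> {x,y}"
  using assms by auto

definition sc :: "nat \<Rightarrow> nat \<Rightarrow> nat" where "sc n i = Suc i mod n"

definition hF :: "(nat \<Rightarrow> 'c) \<Rightarrow> nat \<Rightarrow> 'c \<Rightarrow> int" where
  "hF c t z = (if z = c t then 1 else 0)"

definition hD :: "nat \<Rightarrow> (nat \<Rightarrow> 'c) \<Rightarrow> nat \<Rightarrow> 'c \<Rightarrow> int" where
  "hD n c t z = (if z = c (sc n t) then 2 else if z = c t then 0 else 1)"

lemma sc_lt: "0 < n \<Longrightarrow> sc n i < n" unfolding sc_def by simp

lemma sc_inj: assumes "i < n" "j < n" "sc n i = sc n j" shows "i = j"
proof -
  have "Suc i mod n = Suc j mod n" using assms(3) unfolding sc_def .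
  moreover have "Suc i \<le> n" "Suc j \<le> n" using assms(1,2) by auto
  ultimately show ?thesis
    by (metis Suc_inject assms(1,2) le_neq_implies_less mod_less mod_self nat.distinct(1) old.nat.exhaust)
qed

lemma sc_neq: "2 \<le> n \<Longrightarrow> i < n \<Longrightarrow> sc n i \<noteq> i"
  unfolding sc_def by (metis Suc_lessI mod_less mod_self n_not_Suc_n nat.distinct(1) numeral_2_eq_2 Suc_le_lessD)

lemma sc_less: "Suc i < n \<Longrightarrow> sc n i = Suc i" unfolding sc_def by simp

lemma sc_last: "0 < n \<Longrightarrow> sc n (n - 1) = 0" unfolding sc_def by simp

lemma rot_sum:
  assumes "0 < n"
  shows "(\<Sum>s<n. g (sc n s)) = (\<Sum>s<n. (g s :: int))"
proof -
  obtain k where k: "n = Suc k" using assms by (cases n) auto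
  have "(\<Sum>s<n. g (sc n s)) = (\<Sum>s<k. g (sc n s)) + g (sc n k)" unfolding k by simp
  also have "(\<Sum>s<k. g (sc n s)) = (\<Sum>s<k. g (Suc s))"
    by (intro sum.cong) (auto simp: sc_def k)
  also have "g (sc n k) = g 0" unfolding sc_def k by simp
  also have "(\<Sum>s<k. g (Suc s)) + g 0 = (\<Sum>s<n. g s)" unfolding k sum.lessThan_Suc_shift by simp
  finally show ?thesis .
qed

lemma sum_ind: "i < (n::nat) \<Longrightarrow> (\<Sum>s<n. (if i = s then 1 else 0 :: int)) = 1"
  by (simp add: sum.delta')

lemma hF_c: assumes "inj_on c {..<n}" "i < n" "t < n" shows "hF c t (c i) = (if i = t then 1 else 0)"
  using assms unfolding hF_def inj_on_def by auto

lemma hD_c: assumes "inj_on c {..<n}" "i < n" "t < n" "0 < n"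
  shows "hD n c t (c i) = (if i = sc n t then 2 else if i = t then 0 else 1)"
  using assms sc_lt[OF assms(4), of t] unfolding hD_def inj_on_def by auto

lemma blockF:
  assumes inj: "inj_on c {..<n}" and ij: "i < n" "j < n" "i \<noteq> j"
  shows "(\<Sum>s<n. dd (bo (c ` {..<n}) (hF c s)) (c i) (c j)) = 0"
proof -
  have "(\<Sum>s<n. dd (bo (c ` {..<n}) (hF c s)) (c i) (c j)) =
        (\<Sum>s<n. (if i = s then 1 else 0) - (if j = s then 1 else 0))"
    by (intro sum.cong) (use assms in \<open>auto simp: dd_bo hF_c\<close>)
  also have "\<dots> = 0" using sum_ind[OF ij(1)] sum_ind[OF ij(2)] by (simp add: sum_subtractf)
  finally show ?thesis .
qed

lemma blockD:
  assumes inj: "inj_on c {..<n}" and n: "3 \<le> n" and ij: "i < n" "j < n" "i \<noteq> j"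
  shows "(\<Sum>s<n. dd (bo (c ` {..<n}) (hD n c s)) (c i) (c j)) =
     (if j = sc n i then 1 else 0) - (if i = sc n j then 1 else 0)"
proof -
  let ?I = "\<lambda>P. if P then 1 else 0 :: int"
  have n0: "0 < n" using n by simp
  have pt: "dd (bo (c ` {..<n}) (hD n c s)) (c i) (c j) =
     ?I (i = sc n s) - ?I (j = sc n s) + ?I (j = s) - ?I (i = s) - ?I (i = sc n s \<and> j = s) + ?I (j = sc n s \<and> i = s)"
    if s: "s < n" for s
  proof -
    have ne: "sc n s \<noteq> s" using sc_neq[of n s] n s by simp
    show ?thesis
      using ij ne by (simp add: dd_bo hD_c[OF inj _ s n0] ij)
  qed
  have "(\<Sum>s<n. dd (bo (c ` {..<n}) (hD n c s)) (c i) (c j)) =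
    (\<Sum>s<n. ?I (i = sc n s)) - (\<Sum>s<n. ?I (j = sc n s)) + (\<Sum>s<n. ?I (j = s)) - (\<Sum>s<n. ?I (i = s))
     - (\<Sum>s<n. ?I (i = sc n s \<and> j = s)) + (\<Sum>s<n. ?I (j = sc n s \<and> i = s))"
    by (simp add: pt sum.distrib sum_subtractf)
  also have "(\<Sum>s<n. ?I (i = sc n s)) = 1"
    using rot_sum[OF n0, of "\<lambda>s. ?I (i = s)"] sum_ind[OF ij(1)] by simp
  also have "(\<Sum>s<n. ?I (j = sc n s)) = 1"
    using rot_sum[OF n0, of "\<lambda>s. ?I (j = s)"] sum_ind[OF ij(2)] by simp
  also have "(\<Sum>s<n. ?I (j = s)) = 1" using sum_ind[OF ij(2)] .
  also have "(\<Sum>s<n. ?I (i = s)) = 1" using sum_ind[OF ij(1)] .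
  also have "(\<Sum>s<n. ?I (i = sc n s \<and> j = s)) = ?I (i = sc n j)"
  proof -
    have "(\<Sum>s<n. ?I (i = sc n s \<and> j = s)) = (\<Sum>s<n. if j = s then ?I (i = sc n j) else 0)"
      by (intro sum.cong) auto
    then show ?thesis using ij(2) by (simp add: sum.delta)
  qed
  also have "(\<Sum>s<n. ?I (j = sc n s \<and> i = s)) = ?I (j = sc n i)"
  proof -
    have "(\<Sum>s<n. ?I (j = sc n s \<and> i = s)) = (\<Sum>s<n. if i = s then ?I (j = sc n i) else 0)"
      by (intro sum.cong) auto
    then show ?thesis using ij(1) by (simp add: sum.delta)
  qed
  finally show ?thesis by simp
qed

lemma cycle_contra:
  fixes f :: "('v, 'c) profile \<Rightarrow> 'c rel" and P :: "('v,'c) profile" and c :: "nat \<Rightarrow> 'c"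
  assumes infV: "infinite (UNIV :: 'v set)"
    and vccr: "is_vccr f" and an: "anonymity f" and ne: "neutrality f" and av: "availability f"
    and ni: "neutral_indifference f" and nr: "neutral_reversal f" and ci: "coherent_IIA f"
    and P: "is_profile P" and fxy: "(x,y) \<in> f P"
    and n3: "3 \<le> n" and inj: "inj_on c {..<n}" and Csub: "c ` {..<n} \<subseteq> cands P"
    and c0: "c 0 = x" and c1: "c 1 = y" and mpos: "margin P x y > 0"
    and edges: "\<forall>i<n. margin P x y \<le> margin P (c i) (c (sc n i))"
  shows False
proof -
  define V where "V = voters P"
  define X where "X = cands P"
  define C where "C = c ` {..<n}"
  define m where "m = margin P x y"
  define m' where "m' = nat m"
  have n0: "0 < n" using n3 by simp
  have mm': "int m' = m" using mpos unfolding m'_def m_def by simp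
  have finV: "finite V" and Vne: "V \<noteq> {}" and finX: "finite X"
    using P unfolding is_profile_def V_def X_def by auto
  have swoP: "\<And>v. v \<in> V \<Longrightarrow> strict_weak_order X (ballot P v)"
    and nonV: "\<And>v. v \<notin> V \<Longrightarrow> ballot P v = {}"
    using P unfolding is_profile_def V_def X_def by auto
  have xy: "x \<noteq> y" using c0 c1 inj n3 unfolding inj_on_def by force
  have xC: "x \<in> C" and yC: "y \<in> C" using c0 c1 n3 unfolding C_def by force+
  have CX: "C \<subseteq> X" using Csub unfolding C_def X_def .
  have finC: "finite C" unfolding C_def by simp
  define Fw where "Fw = {v \<in> V. (x,y) \<in> ballot P v}"
  define Bw where "Bw = {v \<in> V. (y,x) \<in> ballot P v}"
  define KL where "KL = Fw \<union> Bw"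
  define ofs where "ofs v = (if v \<in> Fw then 0 else 1::nat)" for v
  define Bal where "Bal q = (case fst q of Inl _ \<Rightarrow> bo C (hF c (snd q)) | Inr _ \<Rightarrow> bo C (hD n c (snd q)))"
    for q :: "('v + nat) \<times> nat"
  define K where "K = Inl ` KL \<union> Inr ` {..<m'}"
  define J where "J = K \<times> {..<n}"
  have KLV: "KL \<subseteq> V" unfolding KL_def Fw_def Bw_def by auto
  have finJ: "finite J" unfolding J_def K_def using finV KLV finite_subset by blast
  have "infinite (UNIV - V)" using infV finV by simp
  then obtain Bset where Bset: "finite Bset" "card Bset = card J" "Bset \<subseteq> UNIV - V"
    using infinite_arbitrarily_large by blast
  then obtain g where g: "bij_betw g J Bset" using finite_same_card_bij[OF finJ Bset(1)] by auto
  have gV: "q \<in> J \<Longrightarrow> g q \<notin> V" for q using g Bset(3) unfolding bij_betw_def by auto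
  have ginj: "inj_on g J" using g unfolding bij_betw_def by simp
  define \<nu> where "\<nu> q = (case fst q of Inl v \<Rightarrow> if snd q = ofs v then v else g q | Inr d \<Rightarrow> g q)" for q
  have ofs_lt: "ofs v < n" for v using n3 unfolding ofs_def by simp
  have \<nu>_orig: "v \<in> KL \<Longrightarrow> (Inl v, ofs v) \<in> J \<and> \<nu> (Inl v, ofs v) = v" for v
    using ofs_lt[of v] unfolding J_def K_def \<nu>_def by auto
  have \<nu>_cases: "(\<exists>v\<in>KL. q = (Inl v, ofs v) \<and> \<nu> q = v) \<or> \<nu> q = g q" if "q \<in> J" for q
  proof (cases q)
    case (Pair k s)
    show ?thesis
    proof (cases k)
      case (Inl v)
      then have "v \<in> KL" using that Pair unfolding J_def K_def by auto
      then show ?thesis using Pair Inl unfolding \<nu>_def by auto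
    next
      case (Inr d)
      then show ?thesis using Pair unfolding \<nu>_def by auto
    qed
  qed
  have \<nu>_inj: "inj_on \<nu> J"
  proof (rule inj_onI)
    fix q1 q2 assume q: "q1 \<in> J" "q2 \<in> J" "\<nu> q1 = \<nu> q2"
    show "q1 = q2"
      using \<nu>_cases[OF q(1)] \<nu>_cases[OF q(2)]
    proof (elim disjE bexE conjE)
      fix v1 v2 assume "v1 \<in> KL" "q1 = (Inl v1, ofs v1)" "\<nu> q1 = v1" "v2 \<in> KL" "q2 = (Inl v2, ofs v2)" "\<nu> q2 = v2"
      then show ?thesis using q by simp
    next
      fix v1 assume "v1 \<in> KL" "q1 = (Inl v1, ofs v1)" "\<nu> q1 = v1" "\<nu> q2 = g q2"
      then show ?thesis using q gV[OF q(2)] KLV by auto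
    next
      fix v2 assume "\<nu> q1 = g q1" "v2 \<in> KL" "q2 = (Inl v2, ofs v2)" "\<nu> q2 = v2"
      then show ?thesis using q gV[OF q(1)] KLV by auto
    next
      assume "\<nu> q1 = g q1" "\<nu> q2 = g q2"
      then show ?thesis using q ginj unfolding inj_on_def by auto
    qed
  qed
  have \<nu>V: "\<exists>v\<in>KL. q = (Inl v, ofs v) \<and> \<nu> q = v" if "q \<in> J" "\<nu> q \<in> V" for q
    using \<nu>_cases[OF that(1)] gV[OF that(1)] that(2) by auto
  have \<nu>JV: "\<nu> ` J \<inter> V = KL"
  proof
    show "\<nu> ` J \<inter> V \<subseteq> KL"
    proof
      fix u assume u: "u \<in> \<nu> ` J \<inter> V"
      then obtain q where q: "q \<in> J" "u = \<nu> q" by blast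
      then obtain v where "v \<in> KL" "\<nu> q = v" using \<nu>V[OF q(1)] u by blast
      then show "u \<in> KL" using q by simp
    qed
    show "KL \<subseteq> \<nu> ` J \<inter> V"
    proof
      fix v assume v: "v \<in> KL"
      then have "v \<in> \<nu> ` J" using \<nu>_orig[OF v] by (metis rev_image_eqI)
      then show "v \<in> \<nu> ` J \<inter> V" using v KLV by blast
    qed
  qed
  have \<nu>inv: "q \<in> J \<Longrightarrow> the_inv_into J \<nu> (\<nu> q) = q" for q using the_inv_into_f_f[OF \<nu>_inj] .
  define VS where "VS = V \<union> \<nu> ` J"
  define bS where "bS u = (if u \<in> \<nu> ` J then Bal (the_inv_into J \<nu> u) else {})" for u
  define S where "S = (VS, C, bS)"
  have Ssel: "voters S = VS" "cands S = C" "ballot S = bS" unfolding S_def voters_def cands_def ballot_def by simp_all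
  have bS\<nu>: "q \<in> J \<Longrightarrow> bS (\<nu> q) = Bal q" for q unfolding bS_def using \<nu>inv by simp
  have bS_orig: "v \<in> KL \<Longrightarrow> bS v = bo C (hF c (ofs v))" for v
    using bS\<nu>[of "(Inl v, ofs v)"] \<nu>_orig[of v] unfolding Bal_def by simp
  have bS_nKL: "v \<in> V - KL \<Longrightarrow> bS v = {}" for v using \<nu>JV unfolding bS_def by auto
  have Bal_swo: "strict_weak_order C (Bal q)" for q unfolding Bal_def by (auto split: sum.split simp: swo_bo)
  have bS_swo: "strict_weak_order C (bS u)" for u unfolding bS_def by (cases "u \<in> \<nu> ` J") (simp_all add: Bal_swo swo_empty)
  have finVS: "finite VS" unfolding VS_def using finV finJ by simp
  have profS: "is_profile S"
    unfolding is_profile_def Ssel using finVS Vne finC xC bS_swo unfolding VS_def bS_def by auto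
  have sumVS: "(\<Sum>u\<in>VS. dd (bS u) a b) = (\<Sum>q\<in>J. dd (Bal q) a b)" for a b
  proof -
    have sub: "\<nu> ` J \<subseteq> VS" unfolding VS_def by auto
    have "(\<Sum>u\<in>VS. dd (bS u) a b) = (\<Sum>u\<in>VS - \<nu> ` J. dd (bS u) a b) + (\<Sum>u\<in>\<nu> ` J. dd (bS u) a b)"
      using sum.subset_diff[OF sub finVS] by simp
    also have "(\<Sum>u\<in>VS - \<nu> ` J. dd (bS u) a b) = 0" unfolding bS_def by (intro sum.neutral) auto
    also have "(\<Sum>u\<in>\<nu> ` J. dd (bS u) a b) = (\<Sum>q\<in>J. dd (bS (\<nu> q)) a b)"
      using sum.reindex[OF \<nu>_inj] by simp
    also have "\<dots> = (\<Sum>q\<in>J. dd (Bal q) a b)" using bS\<nu> by (intro sum.cong) auto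
    finally show ?thesis by simp
  qed
  have sumJ: "(\<Sum>q\<in>J. dd (Bal q) (c i) (c j)) = int m' * ((if j = sc n i then 1 else 0) - (if i = sc n j then 1 else 0))"
    if ij: "i < n" "j < n" "i \<noteq> j" for i j
  proof -
    have finKL: "finite KL" using finV KLV finite_subset by blast
    have "(\<Sum>q\<in>J. dd (Bal q) (c i) (c j)) = (\<Sum>k\<in>K. \<Sum>s<n. dd (Bal (k,s)) (c i) (c j))"
      unfolding J_def by (simp add: sum.cartesian_product)
    also have "\<dots> = (\<Sum>k\<in>Inl ` KL. \<Sum>s<n. dd (Bal (k,s)) (c i) (c j)) + (\<Sum>k\<in>Inr ` {..<m'}. \<Sum>s<n. dd (Bal (k,s)) (c i) (c j))"
      unfolding K_def using finKL by (intro sum.union_disjoint) auto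
    also have "(\<Sum>k\<in>Inl ` KL. \<Sum>s<n. dd (Bal (k,s)) (c i) (c j)) = 0"
    proof -
      have "\<forall>k\<in>Inl ` KL. (\<Sum>s<n. dd (Bal (k,s)) (c i) (c j)) = 0"
        unfolding Bal_def C_def using blockF[OF inj ij] by auto
      then show ?thesis by (simp add: sum.reindex)
    qed
    also have "(\<Sum>k\<in>Inr ` {..<m'}. \<Sum>s<n. dd (Bal (k,s)) (c i) (c j)) =
        (\<Sum>d\<in>{..<m'}. (if j = sc n i then 1 else 0) - (if i = sc n j then 1 else 0))"
      unfolding Bal_def C_def using blockD[OF inj n3 ij] by (simp add: sum.reindex)
    finally show ?thesis by simp
  qed
  have mS: "margin S (c i) (c j) = int m' * ((if j = sc n i then 1 else 0) - (if i = sc n j then 1 else 0))"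
    if ij: "i < n" "j < n" for i j
  proof (cases "i = j")
    case True then show ?thesis unfolding margin_def by simp
  next
    case False
    then show ?thesis using margin_sum[of S] finVS sumVS sumJ[OF ij False] unfolding Ssel by simp
  qed
  have mSxy: "margin S x y = m"
  proof -
    have "sc n 0 = 1" "sc n 1 = 2" using n3 by (simp_all add: sc_def)
    then show ?thesis using mS[of 0 1] n3 c0 c1 mm' by simp
  qed
  define AF where "AF = {u \<in> \<nu> ` J - V. (x,y) \<in> bS u}"
  define AB where "AB = {u \<in> \<nu> ` J - V. (y,x) \<in> bS u}"
  define AT where "AT = \<nu> ` J - V - AF - AB"
  define Rx where "Rx = bo X (\<lambda>z. if z = x then 1 else 0)"
  define Pt where "Pt = (V \<union> AT, X, ballot P)"
  define Pp where "Pp = addp Pt AF AB Rx"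
  have finA: "finite AF" "finite AB" "finite AT" unfolding AF_def AB_def AT_def using finJ by auto
  have AFAB: "AF \<inter> AB = {}" unfolding AF_def AB_def using swo_asym[OF bS_swo] by blast
  have Ptsel: "voters Pt = V \<union> AT" "cands Pt = X" "ballot Pt = ballot P"
    unfolding Pt_def voters_def cands_def ballot_def by simp_all
  have profPt: "is_profile Pt"
    using prof_add_empties[OF P finA(3)] unfolding Pt_def V_def X_def AT_def by auto
  have fPt: "f Pt = f P"
    using f_add_empties[OF ni P finA(3)] unfolding Pt_def V_def X_def AT_def by auto
  have Rxswo: "strict_weak_order (cands Pt) Rx" unfolding Rx_def Ptsel by (rule swo_bo)
  have profPp: "is_profile Pp" unfolding Pp_def by (rule prof_addp[OF profPt Rxswo finA(1,2)])
  have dis1: "AF \<inter> voters Pt = {}" "AB \<inter> voters Pt = {}" unfolding Ptsel AF_def AB_def AT_def by auto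
  have mPp: "margin Pp a b = margin P a b + (int (card AF) - int (card AB)) * dd Rx a b" for a b
    using margin_addp[OF profPt finA(1,2) AFAB dis1, of Rx a b] margin_add_empties[OF P, of AT a b]
    unfolding Pp_def Pt_def V_def X_def by simp
  have xX: "x \<in> X" "y \<in> X" using xC yC CX by auto
  have ddRx: "dd Rx x y = 1" unfolding Rx_def using xX xy by (simp add: dd_bo)
  have Ppsel: "voters Pp = VS" "cands Pp = X"
    "ballot Pp = (\<lambda>u. if u \<in> AF then Rx else if u \<in> AB then Rx\<inverse> else ballot P u)"
    unfolding Pp_def addp_sel Ptsel VS_def AF_def AB_def AT_def by auto
  have irrPp: "(a,a) \<notin> ballot Pp u" for a u
  proof (cases "u \<in> voters Pp")
    case True
    then show ?thesis using profPp swo_irrefl unfolding is_profile_def by metis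
  next
    case False
    then show ?thesis using profPp unfolding is_profile_def by auto
  qed
  have irrS: "(a,a) \<notin> bS u" for a u using swo_irrefl[OF bS_swo] .
  have memb: "((x,y) \<in> ballot Pp u \<longleftrightarrow> (x,y) \<in> bS u) \<and> ((y,x) \<in> ballot Pp u \<longleftrightarrow> (y,x) \<in> bS u)" for u
  proof (cases "u \<in> V")
    case True
    have bPp: "ballot Pp u = ballot P u" using True unfolding Ppsel AF_def AB_def by auto
    have sw: "strict_weak_order X (ballot P u)" using swoP[OF True] .
    show ?thesis
    proof (cases "u \<in> Fw")
      case True
      then have "u \<in> KL" unfolding KL_def by simp
      then have "bS u = bo C (hF c 0)" using bS_orig True unfolding ofs_def by simp
      moreover have "(x,y) \<in> ballot P u" using True unfolding Fw_def by simp
      moreover have "(y,x) \<notin> ballot P u" using calculation(2) swo_asym[OF sw] by blast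
      ultimately show ?thesis using bPp xC yC xy c0 by (simp add: bo_def hF_def)
    next
      case nF: False
      show ?thesis
      proof (cases "u \<in> Bw")
        case True
        then have "u \<in> KL" unfolding KL_def by simp
        then have "bS u = bo C (hF c 1)" using bS_orig nF unfolding ofs_def by simp
        moreover have "(y,x) \<in> ballot P u" "(x,y) \<notin> ballot P u"
          using True nF \<open>u \<in> V\<close> unfolding Fw_def Bw_def by auto
        ultimately show ?thesis using bPp xC yC xy c1 by (simp add: bo_def hF_def)
      next
        case False
        then have "bS u = {}" using bS_nKL nF \<open>u \<in> V\<close> unfolding KL_def by simp
        moreover have "(y,x) \<notin> ballot P u" "(x,y) \<notin> ballot P u"
          using False nF \<open>u \<in> V\<close> unfolding Fw_def Bw_def by auto
        ultimately show ?thesis using bPp by simp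
      qed
    qed
  next
    case nV: False
    have bP: "ballot P u = {}" using nonV[OF nV] .
    show ?thesis
    proof (cases "u \<in> AF")
      case True
      then have xyS: "(x,y) \<in> bS u" unfolding AF_def by simp
      then have "(y,x) \<notin> bS u" using swo_asym[OF bS_swo] by blast
      moreover have "ballot Pp u = Rx" using True unfolding Ppsel by simp
      ultimately show ?thesis using xyS xX xy unfolding Rx_def bo_def by simp
    next
      case nF: False
      show ?thesis
      proof (cases "u \<in> AB")
        case True
        then have "(y,x) \<in> bS u" unfolding AB_def by simp
        moreover have "(x,y) \<notin> bS u" using nF True nV unfolding AF_def AB_def by auto
        moreover have "ballot Pp u = Rx\<inverse>" using True nF unfolding Ppsel by simp
        ultimately show ?thesis using xX xy unfolding Rx_def bo_def by simp
      next
        case False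
        have "ballot Pp u = {}" using False nF bP unfolding Ppsel by simp
        moreover have "(x,y) \<notin> bS u" "(y,x) \<notin> bS u"
        proof -
          have "(x,y) \<notin> bS u \<and> (y,x) \<notin> bS u"
          proof (cases "u \<in> \<nu> ` J")
            case True
            then show ?thesis using False nF nV unfolding AF_def AB_def by blast
          next
            case False
            then show ?thesis unfolding bS_def by simp
          qed
          then show "(x,y) \<notin> bS u" "(y,x) \<notin> bS u" by simp_all
        qed
        ultimately show ?thesis by simp
      qed
    qed
  qed
  have restr: "restrict_profile Pp {x,y} = restrict_profile S {x,y}"
  proof -
    have "ballot Pp u \<inter> {x,y} \<times> {x,y} = bS u \<inter> {x,y} \<times> {x,y}" for u
      using restr_eq[of x "ballot Pp u" y "bS u"] irrPp irrS memb[of u] by blast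
    moreover have "X \<inter> {x,y} = C \<inter> {x,y}" using xX xC yC by auto
    ultimately show ?thesis unfolding restrict_profile_def Ppsel Ssel by auto
  qed
  have "margin Pp x y = margin S x y" using margin_restrict_eq[OF restr] by simp
  then have cardAB: "int (card AF) = int (card AB)" using mPp[of x y] ddRx mSxy m_def by simp
  then have mPpP: "margin Pp a b = margin P a b" for a b using mPp by simp
  have fPp: "f Pp = f P"
  proof -
    have "card AF = card AB" using cardAB by simp
    then have "f (addp Pt AF AB Rx) = f Pt"
      using f_addp[OF nr profPt Rxswo finA(1)] finA(2) AFAB dis1 by blast
    then show ?thesis using fPt Pp_def by simp
  qed
  have coh: "coherent_step Pp x y S"
  proof -
    have "\<forall>a\<in>C. \<forall>b\<in>C. margin S a b > 0 \<longrightarrow>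
        margin Pp a b > 0 \<and> margin S a b \<le> margin Pp a b \<and> ({a, b} = {x, y} \<longrightarrow> margin S a b = margin Pp a b)"
    proof (intro ballI impI)
      fix a b assume ab: "a \<in> C" "b \<in> C" "margin S a b > 0"
      obtain i j where ij: "i < n" "j < n" "a = c i" "b = c j" using ab(1,2) unfolding C_def by auto
      have "j = sc n i" "margin S a b = m"
        using ab(3) mS[OF ij(1,2)] ij(3,4) mm' by (auto split: if_splits)
      then have "margin S a b \<le> margin Pp a b" using edges ij mPpP m_def by simp
      moreover have "margin S a b = margin Pp a b" if "{a,b} = {x,y}"
      proof -
        have "a \<in> {x,y}" "b \<in> {x,y}" using that by blast+
        then show ?thesis using margin_restrict_eq[OF restr, of a b] by simp
      qed
      ultimately show "margin Pp a b > 0 \<and> margin S a b \<le> margin Pp a b \<and> ({a, b} = {x, y} \<longrightarrow> margin S a b = margin Pp a b)"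
        using ab(3) by simp
    qed
    then show ?thesis unfolding coherent_step_def Ssel Ppsel using restr CX xC yC by simp
  qed
  have fS: "(x,y) \<in> f S"
    using ci[unfolded coherent_IIA_def, rule_format, OF profPp profS _ coh] fPp fxy by simp
  define \<pi> where "\<pi> z = (if z \<in> C then c (sc n (the_inv_into {..<n} c z)) else z)" for z
  have \<pi>c: "i < n \<Longrightarrow> \<pi> (c i) = c (sc n i)" for i
    unfolding \<pi>_def C_def using the_inv_into_f_f[OF inj] by simp
  have \<pi>bij: "bij_betw \<pi> C C"
  proof -
    have inj\<pi>: "inj_on \<pi> C"
    proof (rule inj_onI)
      fix a b assume ab: "a \<in> C" "b \<in> C" "\<pi> a = \<pi> b"
      obtain i j where ij: "i < n" "j < n" "a = c i" "b = c j" using ab(1,2) unfolding C_def by auto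
      have "c (sc n i) = c (sc n j)" using ab(3) \<pi>c ij by simp
      then have "sc n i = sc n j" using inj sc_lt[OF n0] unfolding inj_on_def by blast
      then show "a = b" using sc_inj[OF ij(1,2)] ij by simp
    qed
    moreover have "\<pi> ` C \<subseteq> C" using \<pi>c sc_lt[OF n0] unfolding C_def by auto
    ultimately show ?thesis unfolding bij_betw_def using endo_inj_surj[OF finC] by simp
  qed
  define nx where "nx q = (fst q, sc n (snd q))" for q :: "('v + nat) \<times> nat"
  have nxbij: "bij_betw nx J J"
  proof -
    have "inj_on nx J"
    proof (rule inj_onI)
      fix q1 q2 assume q: "q1 \<in> J" "q2 \<in> J" "nx q1 = nx q2"
      then have "snd q1 < n" "snd q2 < n" unfolding J_def by auto
      then show "q1 = q2" using q(3) sc_inj unfolding nx_def by (metis prod.expand prod.inject)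
    qed
    moreover have "nx ` J \<subseteq> J" unfolding nx_def J_def using sc_lt[OF n0] by auto
    ultimately show ?thesis unfolding bij_betw_def using endo_inj_surj[OF finJ] by simp
  qed
  define \<sigma> where "\<sigma> u = (if u \<in> \<nu> ` J then \<nu> (nx (the_inv_into J \<nu> u)) else u)" for u
  have \<sigma>bij: "bij_betw \<sigma> VS VS"
  proof -
    have b\<nu>: "bij_betw \<nu> J (\<nu> ` J)" using \<nu>_inj by (simp add: bij_betw_imageI)
    have "bij_betw (\<nu> \<circ> nx \<circ> the_inv_into J \<nu>) (\<nu> ` J) (\<nu> ` J)"
      using bij_betw_trans[OF bij_betw_trans[OF bij_betw_the_inv_into[OF b\<nu>] nxbij] b\<nu>] by (simp add: comp_assoc)
    then have b1: "bij_betw \<sigma> (\<nu> ` J) (\<nu> ` J)"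
      using bij_betw_cong[of "\<nu> ` J" \<sigma> "\<nu> \<circ> nx \<circ> the_inv_into J \<nu>" "\<nu> ` J"] unfolding \<sigma>_def by simp
    have b2: "bij_betw \<sigma> (VS - \<nu> ` J) (VS - \<nu> ` J)"
      using bij_betw_id bij_betw_cong[of "VS - \<nu> ` J" \<sigma> id "VS - \<nu> ` J"] unfolding \<sigma>_def by simp
    have "bij_betw \<sigma> (\<nu> ` J \<union> (VS - \<nu> ` J)) (\<nu> ` J \<union> (VS - \<nu> ` J))"
      by (rule bij_betw_combine[OF b1 b2]) auto
    moreover have "\<nu> ` J \<union> (VS - \<nu> ` J) = VS" unfolding VS_def by auto
    ultimately show ?thesis by simp
  qed
  have BalRot: "{(\<pi> a, \<pi> b) | a b. (a,b) \<in> Bal q} = Bal (nx q)" if q: "q \<in> J" for q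
  proof -
    obtain k s where ks: "q = (k,s)" "s < n" using q unfolding J_def by auto
    have cz: "\<And>z. z \<in> C \<Longrightarrow> \<exists>i<n. z = c i" unfolding C_def by auto
    show ?thesis
    proof (cases k)
      case (Inl v)
      have "{(\<pi> a, \<pi> b) | a b. (a,b) \<in> bo C (hF c s)} = bo C (hF c (sc n s))"
      proof (rule image_bo[OF \<pi>bij])
        fix z assume "z \<in> C"
        then obtain i where i: "i < n" "z = c i" using cz by blast
        show "hF c (sc n s) (\<pi> z) = hF c s z"
          using i ks(2) \<pi>c hF_c[OF inj] sc_lt[OF n0] sc_inj[OF i(1) ks(2)] by auto
      qed
      then show ?thesis using ks Inl unfolding Bal_def nx_def by simp
    next
      case (Inr d)
      have "{(\<pi> a, \<pi> b) | a b. (a,b) \<in> bo C (hD n c s)} = bo C (hD n c (sc n s))"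
      proof (rule image_bo[OF \<pi>bij])
        fix z assume "z \<in> C"
        then obtain i where i: "i < n" "z = c i" using cz by blast
        have l1: "sc n i < n" "sc n s < n" using sc_lt[OF n0] by auto
        have "sc n i = sc n (sc n s) \<longleftrightarrow> i = sc n s" using sc_inj[OF i(1) l1(2)] by auto
        moreover have "sc n i = sc n s \<longleftrightarrow> i = s" using sc_inj[OF i(1) ks(2)] by auto
        ultimately show "hD n c (sc n s) (\<pi> z) = hD n c s z"
          using i ks(2) \<pi>c hD_c[OF inj _ _ n0] l1 by simp
      qed
      then show ?thesis using ks Inr unfolding Bal_def nx_def by simp
    qed
  qed
  have rotS: "(\<lambda>u. {(\<pi> a, \<pi> b) | a b. (a,b) \<in> bS u}) = (\<lambda>u. if u \<in> VS then bS (\<sigma> u) else {})"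
  proof
    fix u
    show "{(\<pi> a, \<pi> b) | a b. (a,b) \<in> bS u} = (if u \<in> VS then bS (\<sigma> u) else {})"
    proof (cases "u \<in> \<nu> ` J")
      case True
      then obtain q where q: "q \<in> J" "u = \<nu> q" by blast
      have "nx q \<in> J" using nxbij q(1) unfolding bij_betw_def by auto
      then have "bS (\<sigma> u) = Bal (nx q)" unfolding \<sigma>_def using q True \<nu>inv bS\<nu> by simp
      moreover have "u \<in> VS" using True unfolding VS_def by simp
      ultimately show ?thesis using BalRot[OF q(1)] bS\<nu>[OF q(1)] q(2) by simp
    next
      case False
      then show ?thesis unfolding \<sigma>_def bS_def by simp
    qed
  qed
  have step: "(\<pi> a, \<pi> b) \<in> f S" if ab: "(a,b) \<in> f S" "a \<in> C" "b \<in> C" for a b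
  proof -
    have "(\<pi> a, \<pi> b) \<in> f (voters S, cands S, \<lambda>u. {(\<pi> a, \<pi> b) | a b. (a,b) \<in> ballot S u})"
      using ne[unfolded neutrality_def, rule_format, OF profS, of \<pi>] \<pi>bij ab unfolding Ssel by blast
    also have "(voters S, cands S, \<lambda>u. {(\<pi> a, \<pi> b) | a b. (a,b) \<in> ballot S u}) =
        (voters S, cands S, \<lambda>u. if u \<in> voters S then ballot S (\<sigma> u) else {})"
      using rotS unfolding Ssel by simp
    also have "f \<dots> = f S"
      using an[unfolded anonymity_def, rule_format, OF profS, of \<sigma>] \<sigma>bij unfolding Ssel by simp
    finally show ?thesis .
  qed
  have allE: "\<forall>i<n. (c i, c (sc n i)) \<in> f S"
  proof (intro allI impI)
    fix i assume "i < n"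
    then show "(c i, c (sc n i)) \<in> f S"
    proof (induction i)
      case 0
      have "sc n 0 = 1" using n3 by (simp add: sc_def)
      then show ?case using fS c0 c1 by simp
    next
      case (Suc i)
      then have IH: "(c i, c (sc n i)) \<in> f S" by simp
      have l: "i < n" "sc n i < n" using Suc.prems sc_lt[OF n0] by auto
      have "(\<pi> (c i), \<pi> (c (sc n i))) \<in> f S" using step[OF IH] l unfolding C_def by auto
      moreover have "sc n i = Suc i" using Suc.prems by (simp add: sc_def)
      ultimately show ?case using \<pi>c l by simp
    qed
  qed
  obtain z where z: "z \<in> cands S" "\<forall>w. (w, z) \<notin> f S"
    using av[unfolded availability_def, rule_format, OF profS] by blast
  then obtain j where j: "j < n" "z = c j" unfolding Ssel C_def by auto
  define i where "i = (if j = 0 then n - 1 else j - 1)"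
  have "i < n" "sc n i = j" using j n0 unfolding i_def sc_def by auto
  then show False using allE z(2) j(2) by metis
qed

lemma restrict_sel:
  "voters (restrict_profile P Y) = voters P" "cands (restrict_profile P Y) = cands P \<inter> Y"
  "ballot (restrict_profile P Y) = (\<lambda>v. ballot P v \<inter> Y \<times> Y)"
  unfolding restrict_profile_def voters_def cands_def ballot_def by simp_all

lemma restrict_idem: "restrict_profile (restrict_profile P Y) Y = restrict_profile P Y"
  unfolding restrict_profile_def voters_def cands_def ballot_def by (simp add: Int_assoc)

lemma prof_restrict:
  assumes P: "is_profile P" and xy: "x \<in> cands P" "y \<in> cands P"
  shows "is_profile (restrict_profile P {x,y})"
proof -
  have "\<forall>v\<in>voters P. strict_weak_order (cands P \<inter> {x,y}) (ballot P v \<inter> {x,y} \<times> {x,y})"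
    using P swo_restrict_set unfolding is_profile_def by blast
  moreover have "\<forall>v. v \<notin> voters P \<longrightarrow> ballot P v \<inter> {x,y} \<times> {x,y} = {}"
    using P unfolding is_profile_def by blast
  moreover have "cands P \<inter> {x,y} \<noteq> {}" using xy by blast
  ultimately show ?thesis using P unfolding is_profile_def restrict_sel by simp
qed

theorem theorem7p4:
  fixes f :: "('v, 'c) profile \<Rightarrow> 'c rel"
  assumes "infinite (UNIV :: 'v set)" and "infinite (UNIV :: 'c set)"
    and "is_vccr f"
    and "anonymity f" and "neutrality f" and "availability f"
    and "neutral_indifference f" and "monotonicity_two f"
    and "neutral_reversal f" and "coherent_IIA f"
    and "is_profile P"
  shows "f P \<subseteq> split_cycle P"
proof
  fix p assume p: "p \<in> f P"
  obtain x y where pxy: "p = (x,y)" by (cases p)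
  have fxy: "(x,y) \<in> f P" using p pxy by simp
  have vc0: "f P \<subseteq> cands P \<times> cands P \<and> (\<forall>a b. (a,b) \<in> f P \<longrightarrow> (b,a) \<notin> f P)"
    using assms(3)[unfolded is_vccr_def, rule_format, OF assms(11)] .
  have vc: "f P \<subseteq> cands P \<times> cands P" "\<And>a b. (a,b) \<in> f P \<Longrightarrow> (b,a) \<notin> f P"
    using vc0 by blast+
  have xC: "x \<in> cands P" "y \<in> cands P" using vc(1) fxy by auto
  have xy: "x \<noteq> y" using vc(2)[OF fxy] fxy by auto
  define R2 where "R2 = restrict_profile P {x,y}"
  have profR2: "is_profile R2" unfolding R2_def by (rule prof_restrict[OF assms(11) xC])
  have rr: "restrict_profile P {x,y} = restrict_profile R2 {x,y}" unfolding R2_def restrict_idem ..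
  have cR2: "cands R2 = {x,y}" unfolding R2_def restrict_sel using xC by auto
  have mR2: "a \<in> {x,y} \<Longrightarrow> b \<in> {x,y} \<Longrightarrow> margin R2 a b = margin P a b" for a b
    using margin_restrict_eq[OF rr] by simp
  have coh: "coherent_step P x y R2"
    unfolding coherent_step_def using rr cR2 xC mR2 by auto
  have "(x,y) \<in> f R2"
    using assms(10)[unfolded coherent_IIA_def, rule_format, OF assms(11) profR2 fxy coh] .
  then have "margin R2 x y > 0" using two_cand[OF assms(3,4,5,8) profR2 cR2 xy] by simp
  then have mpos: "margin P x y > 0" using mR2[of x y] by simp
  show "p \<in> split_cycle P"
  proof (rule ccontr)
    assume "p \<notin> split_cycle P"
    then obtain xs where xs: "majority_path P xs" "hd xs = y" "last xs = x" "margin P x y \<le> path_strength P xs"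
      unfolding split_cycle_def pxy using xC mpos by auto
    obtain n c where nc: "n \<ge> 3" "inj_on c {..<n}" "c ` {..<n} \<subseteq> cands P" "c 0 = x" "c 1 = y"
      "\<forall>i<n. margin P (c i) (c (Suc i mod n)) \<ge> margin P x y"
      using path_to_cycle[OF assms(11) xC xy mpos xs] by blast
    have "\<forall>i<n. margin P x y \<le> margin P (c i) (c (sc n i))" using nc(6) unfolding sc_def by simp
    then show False
      using cycle_contra[OF assms(1,3,4,5,6,7,9,10,11) fxy nc(1-5) mpos] by blast
  qed
qed

end
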